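(* Let $d\ge1$, $N\ge1$, $T>0$. Let $v_\textup{d}:\mathbb{R}^d\to\mathbb{R}^d$ and $K:\mathbb{R}^d\to\mathbb{R}^d$ be Lipschitz continuous with constants $\operatorname{Lip}(v_\textup{d}),\operatorname{Lip}(K)>0$, $K$ compactly supported, and set $\xi^N:=2\max\{\operatorname{Lip}(v_\textup{d}),N\operatorname{Lip}(K)\}$. (i) Let $\mu_\cdot\in C([0,T];\mathcal{M}^N_1(\mathbb{R}^d))$ be a solution of the Cauchy problem with flow map $\gamma_t$. Then for all $x,y\in\mathbb{R}^d$ and $t\in[0,T]$, $|\gamma_t(y)-\gamma_t(x)|\le e^{\xi^Nt}|y-x|$. (ii) Let $\mu_\cdot,\nu_\cdot\in C([0,T];\mathcal{M}^N_1(\mathbb{R}^d))$ be two solutions of the Cauchy problem with initial data $\bar\mu,\bar\nu\in\mathcal{M}^N_1(\mathbb{R}^d)$ and respective flow maps $\gamma^\mu,\gamma^\nu$. Then for all $x\in\mathbb{R}^d$ and $t\in[0,T]$, \[ |\gamma^\nu_t(x)-\gamma^\mu_t(x)|\le\frac{\xi^Ne^{\xi^Nt}}{N}\int_0^tW_1(\mu_s,\nu_s)\,ds. \]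
   Context: $\mathcal{M}^N_1(\mathbb{R}^d)$ is the set of positive Borel measures on $\mathbb{R}^d$ with total mass $N$ and finite first moment. For $\mu,\nu\in\mathcal{M}^N_1(\mathbb{R}^d)$, $W_1(\mu,\nu)=\inf_{\pi\in\Pi(\mu,\nu)}\int_{\mathbb{R}^d\times\mathbb{R}^d}|x-y|\,d\pi(x,y)$, where $\Pi(\mu,\nu)$ is the set of measures on $\mathbb{R}^d\times\mathbb{R}^d$ with marginals $\mu$ and $\nu$; equivalently $W_1(\mu,\nu)=\sup\{\int\phi\,d(\nu-\mu):\phi:\mathbb{R}^d\to\mathbb{R}\ \text{1-Lipschitz}\}$. The velocity field is $v[\mu](x)=v_\textup{d}(x)-\int_{\mathbb{R}^d}K(y-x)\,d\mu(y)$. A solution of the Cauchy problem $\partial_t\mu_t+\nabla\cdot(\mu_tv[\mu_t])=0$, $\mu_0=\bar\mu$, on $[0,T]$ is a curve $\mu_\cdot\in C([0,T];\mathcal{M}^N_1(\mathbb{R}^d))$ (weak solution) given by $\mu_t=\gamma_t\#\bar\mu$ (push-forward), where the flow map satisfies $\gamma_t(x)=x+\int_0^tv[\mu_s](\gamma_s(x))\,ds$. *)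

theory Defs
  imports "HOL-Analysis.Analysis"
begin

definition M1 :: "real \<Rightarrow> 'a::euclidean_space measure set" where
  "M1 N = {\<mu>. sets \<mu> = sets borel \<and> emeasure \<mu> (space \<mu>) = ennreal N
             \<and> integrable \<mu> (\<lambda>x. norm x)}"

definition couplings :: "'a::euclidean_space measure \<Rightarrow> 'a measure \<Rightarrow> ('a \<times> 'a) measure set" where
  "couplings \<mu> \<nu> = {\<pi>. sets \<pi> = sets (borel :: ('a \<times> 'a) measure)
       \<and> distr \<pi> borel fst = \<mu> \<and> distr \<pi> borel snd = \<nu>}"

definition W1 :: "'a::euclidean_space measure \<Rightarrow> 'a measure \<Rightarrow> ennreal" where
  "W1 \<mu> \<nu> = (INF \<pi> \<in> couplings \<mu> \<nu>. \<integral>\<^sup>+ p. ennreal (dist (fst p) (snd p)) \<partial>\<pi>)"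

definition vfield :: "('a::euclidean_space \<Rightarrow> 'a) \<Rightarrow> ('a \<Rightarrow> 'a) \<Rightarrow> 'a measure \<Rightarrow> 'a \<Rightarrow> 'a" where
  "vfield vd K \<mu> x = vd x - (\<integral>y. K (y - x) \<partial>\<mu>)"

definition is_solution ::
  "real \<Rightarrow> real \<Rightarrow> ('a::euclidean_space \<Rightarrow> 'a) \<Rightarrow> ('a \<Rightarrow> 'a) \<Rightarrow> 'a measure
     \<Rightarrow> (real \<Rightarrow> 'a measure) \<Rightarrow> (real \<Rightarrow> 'a \<Rightarrow> 'a) \<Rightarrow> bool" where
  "is_solution N T vd K \<mu>bar \<mu> \<gamma> \<longleftrightarrow>
     \<mu>bar \<in> M1 N
     \<and> (\<forall>t\<in>{0..T}. \<mu> t \<in> M1 N)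
     \<and> (\<forall>t\<in>{0..T}. ((\<lambda>s. W1 (\<mu> s) (\<mu> t)) \<longlongrightarrow> 0) (at t within {0..T}))
     \<and> (\<forall>t\<in>{0..T}. \<gamma> t \<in> borel_measurable borel \<and> \<mu> t = distr \<mu>bar borel (\<gamma> t))
     \<and> (\<forall>t\<in>{0..T}. \<forall>x. ((\<lambda>s. vfield vd K (\<mu> s) (\<gamma> s x)) has_integral (\<gamma> t x - x)) {0..t})"

end

theory Submission
  imports Defs
begin



lemma gronwall_fwd:
  fixes u :: "real \<Rightarrow> real"
  assumes cu: "continuous_on {0..b} u" and L: "L \<ge> 0"
   and le: "\<And>t. t \<in> {0..b} \<Longrightarrow> u t \<le> C + L * integral {0..t} u"
   and t: "t \<in> {0..b}"
  shows "u t \<le> C * exp (L * t)"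
proof -
  define \<phi> where "\<phi> = (\<lambda>t. integral {0..t} u)"
  define h where "h = (\<lambda>t. exp (- L * t) * (C + L * \<phi> t))"
  have d\<phi>: "(\<phi> has_real_derivative u x) (at x within {0..b})" if "x \<in> {0..b}" for x
    unfolding \<phi>_def by (rule integral_has_real_derivative[OF cu that])
  have c\<phi>: "continuous_on {0..b} \<phi>"
    using d\<phi> DERIV_continuous_on by blast
  have ch: "continuous_on {0..t} h"
    unfolding h_def using t
    by (intro continuous_intros continuous_on_subset[OF c\<phi>]) auto
  have "h t \<le> h 0"
  proof (rule DERIV_nonpos_imp_decreasing_open[OF _ _ ch])
    show "0 \<le> t" using t by auto
    fix x assume x: "0 < x" "x < t"
    then have xi: "x \<in> interior {0..b}" using t by auto
    have "(\<phi> has_real_derivative u x) (at x)"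
      using d\<phi>[of x] xi at_within_interior[OF xi] interior_subset by fastforce
    then have "(h has_real_derivative (exp (- L * x) * (- L) * (C + L * \<phi> x) + exp (- L * x) * (L * u x))) (at x)"
      unfolding h_def by (auto intro!: derivative_eq_intros)
    moreover have "exp (- L * x) * (- L) * (C + L * \<phi> x) + exp (- L * x) * (L * u x) \<le> 0"
    proof -
      have "u x \<le> C + L * \<phi> x" using le[of x] x t unfolding \<phi>_def by auto
      then have "L * u x \<le> L * (C + L * \<phi> x)" using L by (simp add: mult_left_mono)
      then have "exp (- L * x) * (L * u x) \<le> exp (- L * x) * (L * (C + L * \<phi> x))" by simp
      then show ?thesis by (simp add: algebra_simps)
    qed
    ultimately show "\<exists>y. (h has_real_derivative y) (at x) \<and> y \<le> 0" by blast
  qed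
  moreover have "h 0 = C" unfolding h_def \<phi>_def by simp
  ultimately have "h t \<le> C" by simp
  then have "exp (- L * t) * (C + L * \<phi> t) \<le> C" unfolding h_def by simp
  then have "C + L * \<phi> t \<le> C * exp (L * t)"
  proof -
    assume a: "exp (- L * t) * (C + L * \<phi> t) \<le> C"
    have "exp (L * t) * (exp (- L * t) * (C + L * \<phi> t)) \<le> exp (L * t) * C"
      using a by (intro mult_left_mono) auto
    moreover have "exp (L * t) * exp (- L * t) = 1" by (simp add: exp_minus_inverse)
    ultimately show ?thesis by (metis mult.assoc mult.commute mult_1)
  qed
  moreover have "u t \<le> C + L * \<phi> t" using le[OF t] unfolding \<phi>_def .
  ultimately show ?thesis by linarith
qed

lemma gronwall_bwd_zero:
  fixes u :: "real \<Rightarrow> real"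
  assumes cu: "continuous_on {a..b} u" and L: "L \<ge> 0"
   and nn: "\<And>t. t \<in> {a..b} \<Longrightarrow> u t \<ge> 0"
   and le: "\<And>t. t \<in> {a..b} \<Longrightarrow> u t \<le> L * integral {t..b} u"
   and t: "t \<in> {a..b}"
  shows "u t = 0"
proof -
  define \<psi> where "\<psi> = (\<lambda>t. integral {a..t} u)"
  define \<phi> where "\<phi> = (\<lambda>t. integral {a..b} u - \<psi> t)"
  have intu: "u integrable_on {a..b}" using cu integrable_continuous_real by blast
  have phi_eq: "\<phi> r = integral {r..b} u" if "r \<in> {a..b}" for r
    unfolding \<phi>_def \<psi>_def using Henstock_Kurzweil_Integration.integral_combine[where a=a and c=r and b=b and f=u] that intu by auto
  define h where "h = (\<lambda>t. exp (L * t) * \<phi> t)"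
  have d\<psi>: "(\<psi> has_real_derivative u x) (at x within {a..b})" if "x \<in> {a..b}" for x
    unfolding \<psi>_def by (rule integral_has_real_derivative[OF cu that])
  have c\<psi>: "continuous_on {a..b} \<psi>"
    using d\<psi> DERIV_continuous_on by blast
  have ch: "continuous_on {t..b} h"
    unfolding h_def \<phi>_def using t
    by (intro continuous_intros continuous_on_subset[OF c\<psi>]) auto
  have "h t \<le> h b"
  proof (rule DERIV_nonneg_imp_increasing_open[OF _ _ ch])
    show "t \<le> b" using t by auto
    fix x assume x: "t < x" "x < b"
    then have xi: "x \<in> interior {a..b}" using t by auto
    have "(\<psi> has_real_derivative u x) (at x)"
      using d\<psi>[of x] xi at_within_interior[OF xi] interior_subset by fastforce
    then have "(h has_real_derivative (exp (L * x) * L * \<phi> x + exp (L * x) * (- u x))) (at x)"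
      unfolding h_def \<phi>_def by (auto intro!: derivative_eq_intros)
    moreover have "exp (L * x) * L * \<phi> x + exp (L * x) * (- u x) \<ge> 0"
    proof -
      have "u x \<le> L * \<phi> x" using le[of x] x t phi_eq[of x] by auto
      then have "exp (L * x) * u x \<le> exp (L * x) * (L * \<phi> x)" by simp
      then show ?thesis by (simp add: algebra_simps)
    qed
    ultimately show "\<exists>y. (h has_real_derivative y) (at x) \<and> y \<ge> 0" by blast
  qed
  moreover have "h b = 0" unfolding h_def \<phi>_def \<psi>_def by simp
  ultimately have "exp (L * t) * \<phi> t \<le> 0" unfolding h_def by simp
  then have "\<phi> t \<le> 0" by (simp add: mult_le_0_iff)
  then have "L * \<phi> t \<le> 0" using L by (rule mult_nonneg_nonpos[rotated])
  moreover have "u t \<le> L * \<phi> t" using le[OF t] phi_eq[OF t] by simp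
  ultimately have "u t \<le> 0" by linarith
  then show ?thesis using nn[OF t] by simp
qed




lemma M1_D:
  assumes "\<mu> \<in> M1 N"
  shows "sets \<mu> = sets borel" "space \<mu> = UNIV" "finite_measure \<mu>"
    "emeasure \<mu> UNIV = ennreal N" "integrable \<mu> (\<lambda>x. norm x)"
proof -
  have a: "sets \<mu> = sets borel" "emeasure \<mu> (space \<mu>) = ennreal N" "integrable \<mu> (\<lambda>x. norm x)"
    using assms by (simp_all add: M1_def)
  show s: "sets \<mu> = sets borel" by (rule a(1))
  have "space \<mu> = space borel" by (rule sets_eq_imp_space_eq[OF s])
  then show sp: "space \<mu> = UNIV" by simp
  show e: "emeasure \<mu> UNIV = ennreal N" using a(2) sp by simp
  show "finite_measure \<mu>" by (rule finite_measureI) (simp add: sp e)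
  show "integrable \<mu> (\<lambda>x. norm x)" by (rule a(3))
qed

lemma M1_measure:
  assumes "\<mu> \<in> M1 N" "N \<ge> 0"
  shows "measure \<mu> UNIV = N"
  using M1_D[OF assms(1)] assms(2) by (simp add: measure_def)

lemma M1_meas_cong:
  assumes "\<mu> \<in> M1 N" "f \<in> borel_measurable borel"
  shows "f \<in> borel_measurable \<mu>"
  by (subst measurable_cong_sets[OF M1_D(1)[OF assms(1)] refl]) (rule assms(2))

locale setting =
  fixes vd K :: "'a::euclidean_space \<Rightarrow> 'a" and N Lv LK MK :: real
  assumes Npos: "N > 0" and Lv: "Lv \<ge> 0" "Lv-lipschitz_on UNIV vd"
    and LK: "LK > 0" "LK-lipschitz_on UNIV K"
    and MK: "\<And>x. norm (K x) \<le> MK"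
begin

lemma K_cont: "continuous_on UNIV K"
  by (rule lipschitz_on_continuous_on[OF LK(2)])

lemma vd_cont: "continuous_on UNIV vd"
  by (rule lipschitz_on_continuous_on[OF Lv(2)])

lemma K_lip: "norm (K x - K y) \<le> LK * norm (x - y)"
  using lipschitz_onD[OF LK(2)] by (simp add: dist_norm)

lemma vd_lip: "norm (vd x - vd y) \<le> Lv * norm (x - y)"
  using lipschitz_onD[OF Lv(2)] by (simp add: dist_norm)

lemma K_meas: "(\<lambda>y. K (y - a)) \<in> borel_measurable borel"
proof -
  have "continuous_on UNIV (\<lambda>y. K (y - a))"
    by (rule continuous_on_compose2[OF K_cont]) (auto intro!: continuous_intros)
  then show ?thesis by (rule borel_measurable_continuous_onI)
qed

lemma K_int:
  assumes "\<mu> \<in> M1 N'"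
  shows "integrable \<mu> (\<lambda>y. K (y - a))"
proof -
  interpret finite_measure \<mu> using M1_D[OF assms] by simp
  show ?thesis
    using MK by (intro integrable_const_bound[where B=MK] M1_meas_cong[OF assms K_meas]) auto
qed

lemma K_diff:
  assumes "\<mu> \<in> M1 N"
  shows "norm ((\<integral>y. K (y - a) \<partial>\<mu>) - (\<integral>y. K (y - b) \<partial>\<mu>)) \<le> N * LK * norm (a - b)"
proof -
  interpret finite_measure \<mu> using M1_D[OF assms] by simp
  have "(\<integral>y. K (y - a) \<partial>\<mu>) - (\<integral>y. K (y - b) \<partial>\<mu>) = (\<integral>y. K (y - a) - K (y - b) \<partial>\<mu>)"
    by (rule Bochner_Integration.integral_diff[symmetric]) (rule K_int[OF assms])+
  also have "norm \<dots> \<le> (\<integral>y. norm (K (y - a) - K (y - b)) \<partial>\<mu>)" by (rule integral_norm_bound)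
  also have "\<dots> \<le> (\<integral>y. LK * norm (a - b) \<partial>\<mu>)"
  proof (rule integral_mono)
    show "integrable \<mu> (\<lambda>y. norm (K (y - a) - K (y - b)))"
      by (intro integrable_norm Bochner_Integration.integrable_diff K_int[OF assms])
    fix y show "norm (K (y - a) - K (y - b)) \<le> LK * norm (a - b)"
      using K_lip[of "y - a" "y - b"] by (simp add: norm_minus_commute)
  qed simp
  also have "\<dots> = N * LK * norm (a - b)"
    using M1_measure[OF assms] Npos M1_D(2)[OF assms] by simp
  finally show ?thesis .
qed

lemma vfield_lip:
  assumes "\<mu> \<in> M1 N"
  shows "norm (vfield vd K \<mu> a - vfield vd K \<mu> b) \<le> (Lv + N * LK) * norm (a - b)"
proof -
  have "vfield vd K \<mu> a - vfield vd K \<mu> b = (vd a - vd b) - ((\<integral>y. K (y - a) \<partial>\<mu>) - (\<integral>y. K (y - b) \<partial>\<mu>))"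
    by (simp add: vfield_def algebra_simps)
  also have "norm \<dots> \<le> norm (vd a - vd b) + norm ((\<integral>y. K (y - a) \<partial>\<mu>) - (\<integral>y. K (y - b) \<partial>\<mu>))"
    by (rule norm_triangle_ineq4)
  also have "\<dots> \<le> Lv * norm (a - b) + N * LK * norm (a - b)"
    by (intro add_mono vd_lip K_diff[OF assms])
  finally show ?thesis by (simp add: algebra_simps)
qed

end



lemma inteq_cont:
  fixes f g :: "real \<Rightarrow> 'a::euclidean_space"
  assumes hi: "\<And>t. t \<in> {0..T} \<Longrightarrow> (f has_integral (g t - g0)) {0..t}" and T: "T \<ge> 0"
  shows "continuous_on {0..T} g" "\<And>t. t \<in> {0..T} \<Longrightarrow> g t = g0 + integral {0..t} f"
    "f integrable_on {0..T}"
proof -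
  show eq: "g t = g0 + integral {0..t} f" if "t \<in> {0..T}" for t
    using hi[OF that] by (simp add: integral_unique)
  show fi: "f integrable_on {0..T}" using hi[of T] T by auto
  have "continuous_on {0..T} (\<lambda>t. g0 + integral {0..t} f)"
    by (intro continuous_intros indefinite_integral_continuous_1 fi)
  then show "continuous_on {0..T} g"
    by (rule continuous_on_eq) (simp add: eq)
qed

lemma gron_vec:
  fixes f g :: "real \<Rightarrow> 'a::euclidean_space" and c :: "real \<Rightarrow> real"
  assumes hi: "\<And>t. t \<in> {0..T} \<Longrightarrow> (f has_integral (g t - g0)) {0..t}" and T: "T \<ge> 0"
    and L: "L \<ge> 0"
    and bd: "\<And>s. s \<in> {0..T} \<Longrightarrow> norm (f s) \<le> L * norm (g s) + c s"
    and ci: "c integrable_on {0..T}" and cnn: "\<And>s. s \<in> {0..T} \<Longrightarrow> c s \<ge> 0"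
    and t: "t \<in> {0..T}"
  shows "norm (g t) \<le> (norm g0 + integral {0..t} c) * exp (L * t)"
proof -
  have gc: "continuous_on {0..T} g" and geq: "\<And>t. t \<in> {0..T} \<Longrightarrow> g t = g0 + integral {0..t} f"
    and fi: "f integrable_on {0..T}"
    using inteq_cont[OF hi T] by auto
  define C where "C = norm g0 + integral {0..t} c"
  have uc: "continuous_on {0..t} (\<lambda>s. norm (g s))"
    using t by (intro continuous_intros continuous_on_subset[OF gc]) auto
  show ?thesis unfolding C_def[symmetric]
  proof (rule gronwall_fwd[OF uc L])
    show "t \<in> {0..t}" using t by auto
    fix r assume r: "r \<in> {0..t}"
    then have rT: "r \<in> {0..T}" using t by auto
    have sub: "{0..r} \<subseteq> {0..T}" using rT by auto
    have ui: "(\<lambda>s. norm (g s)) integrable_on {0..r}"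
      using rT by (intro integrable_continuous_real continuous_intros continuous_on_subset[OF gc]) auto
    have cir: "c integrable_on {0..r}" using integrable_on_subinterval[OF ci sub] .
    have "norm (g r) \<le> norm g0 + norm (integral {0..r} f)"
      using geq[OF rT] norm_triangle_ineq by simp
    also have "norm (integral {0..r} f) \<le> integral {0..r} (\<lambda>s. L * norm (g s) + c s)"
    proof (rule integral_norm_bound_integral)
      show "f integrable_on {0..r}" using integrable_on_subinterval[OF fi sub] .
      show "(\<lambda>s. L * norm (g s) + c s) integrable_on {0..r}"
      proof (intro integrable_add cir)
        show "(\<lambda>s. L * norm (g s)) integrable_on {0..r}"
          using rT by (intro integrable_continuous_real continuous_intros continuous_on_subset[OF gc]) auto
      qed
      show "norm (f s) \<le> L * norm (g s) + c s" if "s \<in> {0..r}" for s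
        using bd[of s] that sub by auto
    qed
    also have "integral {0..r} (\<lambda>s. L * norm (g s) + c s) = L * integral {0..r} (\<lambda>s. norm (g s)) + integral {0..r} c"
    proof -
      have "(\<lambda>s. L * norm (g s)) integrable_on {0..r}"
        using rT by (intro integrable_continuous_real continuous_intros continuous_on_subset[OF gc]) auto
      then show ?thesis
        using Henstock_Kurzweil_Integration.integral_add[OF _ cir, of "\<lambda>s. L * norm (g s)"] by simp
    qed
    also have "integral {0..r} c \<le> integral {0..t} c"
    proof (rule integral_subset_le)
      show "{0..r} \<subseteq> {0..t}" using r by auto
      show "c integrable_on {0..r}" by (rule cir)
      show "c integrable_on {0..t}" using integrable_on_subinterval[OF ci] t by auto
      show "\<forall>x\<in>{0..t}. 0 \<le> c x" using cnn t by auto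
    qed
    finally show "norm (g r) \<le> C + L * integral {0..r} (\<lambda>s. norm (g s))"
      unfolding C_def by simp
  qed
qed

context setting begin

lemma sol_D:
  assumes "is_solution N T vd K \<mu>bar \<mu> \<gamma>"
  shows "\<mu>bar \<in> M1 N" "\<And>t. t \<in> {0..T} \<Longrightarrow> \<mu> t \<in> M1 N"
    "\<And>t. t \<in> {0..T} \<Longrightarrow> \<gamma> t \<in> borel_measurable borel"
    "\<And>t. t \<in> {0..T} \<Longrightarrow> \<mu> t = distr \<mu>bar borel (\<gamma> t)"
    "\<And>t x. t \<in> {0..T} \<Longrightarrow> ((\<lambda>s. vfield vd K (\<mu> s) (\<gamma> s x)) has_integral (\<gamma> t x - x)) {0..t}"
  using assms unfolding is_solution_def by auto

lemma flow_lip: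
  assumes sol: "is_solution N T vd K \<mu>bar \<mu> \<gamma>" and T: "T \<ge> 0" and t: "t \<in> {0..T}"
  shows "norm (\<gamma> t y - \<gamma> t x) \<le> exp ((Lv + N * LK) * t) * norm (y - x)"
proof -
  have "norm (\<gamma> t y - \<gamma> t x) \<le> (norm (y - x) + integral {0..t} (\<lambda>s. 0::real)) * exp ((Lv + N * LK) * t)"
  proof (rule gron_vec[OF _ T _ _ _ _ t])
    fix r assume r: "r \<in> {0..T}"
    show "((\<lambda>s. vfield vd K (\<mu> s) (\<gamma> s y) - vfield vd K (\<mu> s) (\<gamma> s x)) has_integral
           (\<gamma> r y - \<gamma> r x - (y - x))) {0..r}"
      using has_integral_diff[OF sol_D(5)[OF sol r, of y] sol_D(5)[OF sol r, of x]]
      by (simp add: algebra_simps)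
  next
    show "0 \<le> Lv + N * LK" using Lv LK Npos by simp
  next
    fix s assume s: "s \<in> {0..T}"
    show "norm (vfield vd K (\<mu> s) (\<gamma> s y) - vfield vd K (\<mu> s) (\<gamma> s x))
          \<le> (Lv + N * LK) * norm (\<gamma> s y - \<gamma> s x) + 0"
      using vfield_lip[OF sol_D(2)[OF sol s]] by simp
  qed auto
  then show ?thesis by (simp add: mult.commute)
qed

end



lemma fst_borel[measurable]: "fst \<in> borel_measurable (borel :: ('a::euclidean_space \<times> 'a) measure)"
  by (intro borel_measurable_continuous_onI continuous_intros)

lemma snd_borel[measurable]: "snd \<in> borel_measurable (borel :: ('a::euclidean_space \<times> 'a) measure)"
  by (intro borel_measurable_continuous_onI continuous_intros)

lemma coupling_D:
  assumes "\<pi> \<in> couplings \<mu> \<nu>"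
  shows "sets \<pi> = sets borel" "distr \<pi> borel fst = \<mu>" "distr \<pi> borel snd = \<nu>"
    "fst \<in> borel_measurable \<pi>" "snd \<in> borel_measurable \<pi>"
proof -
  show s: "sets \<pi> = sets borel" "distr \<pi> borel fst = \<mu>" "distr \<pi> borel snd = \<nu>"
    using assms by (simp_all add: couplings_def)
  show "fst \<in> borel_measurable \<pi>"
    by (subst measurable_cong_sets[OF s(1) refl]) (rule fst_borel)
  show "snd \<in> borel_measurable \<pi>"
    by (subst measurable_cong_sets[OF s(1) refl]) (rule snd_borel)
qed

lemma nn_norm_finite:
  assumes "\<mu> \<in> M1 N"
  shows "(\<integral>\<^sup>+ x. ennreal (norm x) \<partial>\<mu>) < \<infinity>"
  using integrableD(2)[OF M1_D(5)[OF assms]] by (simp add: less_top)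

lemma coupling_cost_bound:
  fixes \<mu> \<nu> :: "'a::euclidean_space measure"
  assumes pi: "\<pi> \<in> couplings \<mu> \<nu>"
  shows "(\<integral>\<^sup>+ p. ennreal (dist (fst p) (snd p)) \<partial>\<pi>) \<le> (\<integral>\<^sup>+ x. ennreal (norm x) \<partial>\<mu>) + (\<integral>\<^sup>+ x. ennreal (norm x) \<partial>\<nu>)"
proof -
  note c = coupling_D[OF pi]
  have "(\<integral>\<^sup>+ p. ennreal (dist (fst p) (snd p)) \<partial>\<pi>) \<le> (\<integral>\<^sup>+ p. ennreal (norm (fst p)) + ennreal (norm (snd p)) \<partial>\<pi>)"
  proof (rule nn_integral_mono)
    fix p :: "'a \<times> 'a"
    have "dist (fst p) (snd p) \<le> norm (fst p) + norm (snd p)"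
      by (simp add: dist_norm norm_triangle_ineq4)
    then show "ennreal (dist (fst p) (snd p)) \<le> ennreal (norm (fst p)) + ennreal (norm (snd p))"
      by (simp add: ennreal_plus[symmetric] del: ennreal_plus)
  qed
  also have "\<dots> = (\<integral>\<^sup>+ p. ennreal (norm (fst p)) \<partial>\<pi>) + (\<integral>\<^sup>+ p. ennreal (norm (snd p)) \<partial>\<pi>)"
    using c(4,5) by (intro nn_integral_add) auto
  also have "(\<integral>\<^sup>+ p. ennreal (norm (fst p)) \<partial>\<pi>) = (\<integral>\<^sup>+ x. ennreal (norm x) \<partial>\<mu>)"
  proof -
    have meas: "(\<lambda>x. ennreal (norm x)) \<in> borel_measurable (distr \<pi> borel fst)"
      by (subst measurable_cong_sets[OF sets_distr refl]) simp
    show ?thesis using nn_integral_distr[OF c(4) meas] unfolding c(2) by simp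
  qed
  also have "(\<integral>\<^sup>+ p. ennreal (norm (snd p)) \<partial>\<pi>) = (\<integral>\<^sup>+ x. ennreal (norm x) \<partial>\<nu>)"
  proof -
    have meas: "(\<lambda>x. ennreal (norm x)) \<in> borel_measurable (distr \<pi> borel snd)"
      by (subst measurable_cong_sets[OF sets_distr refl]) simp
    show ?thesis using nn_integral_distr[OF c(5) meas] unfolding c(3) by simp
  qed
  finally show ?thesis .
qed

lemma product_coupling:
  fixes \<mu> \<nu> :: "'a::euclidean_space measure"
  assumes m: "\<mu> \<in> M1 N" and n: "\<nu> \<in> M1 N" and N: "N > 0"
  shows "density (\<mu> \<Otimes>\<^sub>M \<nu>) (\<lambda>_. ennreal (1 / N)) \<in> couplings \<mu> \<nu>"
proof -
  define \<pi> where "\<pi> = density (\<mu> \<Otimes>\<^sub>M \<nu>) (\<lambda>_. ennreal (1 / N))"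
  interpret m: finite_measure \<mu> using M1_D[OF m] by simp
  interpret n: finite_measure \<nu> using M1_D[OF n] by simp
  interpret pair_sigma_finite \<mu> \<nu> by unfold_locales
  have sp: "sets (\<mu> \<Otimes>\<^sub>M \<nu>) = sets (borel :: ('a \<times> 'a) measure)"
    using sets_pair_measure_cong[OF M1_D(1)[OF m] M1_D(1)[OF n]] borel_prod by metis
  have s: "sets \<pi> = sets (borel :: ('a \<times> 'a) measure)" unfolding \<pi>_def using sp by simp
  have spc: "space \<pi> = UNIV" using sets_eq_imp_space_eq[OF s] by simp
  have fm: "fst \<in> measurable \<pi> borel" by (subst measurable_cong_sets[OF s refl]) (rule fst_borel)
  have sm: "snd \<in> measurable \<pi> borel" by (subst measurable_cong_sets[OF s refl]) (rule snd_borel)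
  have e\<mu>: "emeasure \<mu> UNIV = ennreal N" "emeasure \<nu> UNIV = ennreal N"
    using M1_D(4)[OF m] M1_D(4)[OF n] by auto
  have inv: "ennreal (1 / N) * ennreal N = 1" using N by (simp add: ennreal_mult[symmetric] del: ennreal_mult)
  have dfst: "distr \<pi> borel fst = \<mu>"
  proof (rule measure_eqI)
    show "sets (distr \<pi> borel fst) = sets \<mu>" using M1_D(1)[OF m] by simp
    fix A assume "A \<in> sets (distr \<pi> borel fst)"
    then have A: "A \<in> sets borel" "A \<in> sets \<mu>" using M1_D(1)[OF m] by auto
    have AU: "A \<times> UNIV \<in> sets (\<mu> \<Otimes>\<^sub>M \<nu>)"
      using A M1_D(2)[OF n] by (metis pair_measureI sets.top)
    have "emeasure (distr \<pi> borel fst) A = emeasure \<pi> (A \<times> UNIV)"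
      using A fm spc by (simp add: emeasure_distr vimage_fst vimage_snd)
    also have "\<dots> = ennreal (1 / N) * emeasure (\<mu> \<Otimes>\<^sub>M \<nu>) (A \<times> UNIV)"
      unfolding \<pi>_def using AU by (simp add: emeasure_density nn_integral_cmult_indicator)
    also have "\<dots> = ennreal (1 / N) * (emeasure \<mu> A * ennreal N)"
      using n.emeasure_pair_measure_Times[of A \<mu> "space \<nu>"] A M1_D(2)[OF n] e\<mu> sets.top[of \<nu>] by simp
    also have "\<dots> = emeasure \<mu> A" by (metis inv mult.commute mult.left_commute mult_1_right)
    finally show "emeasure (distr \<pi> borel fst) A = emeasure \<mu> A" .
  qed
  have dsnd: "distr \<pi> borel snd = \<nu>"
  proof (rule measure_eqI)
    show "sets (distr \<pi> borel snd) = sets \<nu>" using M1_D(1)[OF n] by simp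
    fix A assume "A \<in> sets (distr \<pi> borel snd)"
    then have A: "A \<in> sets borel" "A \<in> sets \<nu>" using M1_D(1)[OF n] by auto
    have AU: "UNIV \<times> A \<in> sets (\<mu> \<Otimes>\<^sub>M \<nu>)"
      using A M1_D(2)[OF m] by (metis pair_measureI sets.top)
    have "emeasure (distr \<pi> borel snd) A = emeasure \<pi> (UNIV \<times> A)"
      using A sm spc by (simp add: emeasure_distr vimage_fst vimage_snd)
    also have "\<dots> = ennreal (1 / N) * emeasure (\<mu> \<Otimes>\<^sub>M \<nu>) (UNIV \<times> A)"
      unfolding \<pi>_def using AU by (simp add: emeasure_density nn_integral_cmult_indicator)
    also have "\<dots> = ennreal (1 / N) * (ennreal N * emeasure \<nu> A)"
      using n.emeasure_pair_measure_Times[of "space \<mu>" \<mu> A] A M1_D(2)[OF m] e\<mu> sets.top[of \<mu>] by simp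
    also have "\<dots> = emeasure \<nu> A" by (metis inv mult.assoc mult_1)
    finally show "emeasure (distr \<pi> borel snd) A = emeasure \<nu> A" .
  qed
  show ?thesis unfolding \<pi>_def[symmetric] couplings_def using s dfst dsnd by simp
qed

lemma W1_le:
  assumes "\<pi> \<in> couplings \<mu> \<nu>"
  shows "W1 \<mu> \<nu> \<le> (\<integral>\<^sup>+ p. ennreal (dist (fst p) (snd p)) \<partial>\<pi>)"
  unfolding W1_def using assms by (rule INF_lower)

lemma W1_finite:
  fixes \<mu> \<nu> :: "'a::euclidean_space measure"
  assumes m: "\<mu> \<in> M1 N" and n: "\<nu> \<in> M1 N" and N: "N > 0"
  shows "W1 \<mu> \<nu> < \<infinity>"
proof -
  have "W1 \<mu> \<nu> \<le> (\<integral>\<^sup>+ x. ennreal (norm x) \<partial>\<mu>) + (\<integral>\<^sup>+ x. ennreal (norm x) \<partial>\<nu>)"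
    using W1_le[OF product_coupling[OF m n N]] coupling_cost_bound[OF product_coupling[OF m n N]]
    by (rule order_trans)
  also have "\<dots> < \<infinity>" using nn_norm_finite[OF m] nn_norm_finite[OF n] by simp
  finally show ?thesis .
qed




context setting begin

lemma K_int_coupling:
  assumes pi: "\<pi> \<in> couplings \<mu> \<nu>" and m: "\<mu> \<in> M1 N'" and n: "\<nu> \<in> M1 N'"
  shows "integrable \<pi> (\<lambda>p. K (fst p - a))" "integrable \<pi> (\<lambda>p. K (snd p - a))"
    "(\<integral>y. K (y - a) \<partial>\<mu>) = (\<integral>p. K (fst p - a) \<partial>\<pi>)"
    "(\<integral>y. K (y - a) \<partial>\<nu>) = (\<integral>p. K (snd p - a) \<partial>\<pi>)"
proof -
  note c = coupling_D[OF pi]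
  show "integrable \<pi> (\<lambda>p. K (fst p - a))"
    using integrable_distr_eq[OF c(4) K_meas] K_int[OF m] unfolding c(2) by simp
  show "integrable \<pi> (\<lambda>p. K (snd p - a))"
    using integrable_distr_eq[OF c(5) K_meas] K_int[OF n] unfolding c(3) by simp
  show "(\<integral>y. K (y - a) \<partial>\<mu>) = (\<integral>p. K (fst p - a) \<partial>\<pi>)"
    using integral_distr[OF c(4) K_meas] unfolding c(2) by simp
  show "(\<integral>y. K (y - a) \<partial>\<nu>) = (\<integral>p. K (snd p - a) \<partial>\<pi>)"
    using integral_distr[OF c(5) K_meas] unfolding c(3) by simp
qed

lemma K_W1:
  assumes m: "\<mu> \<in> M1 N" and n: "\<nu> \<in> M1 N"
  shows "norm ((\<integral>y. K (y - a) \<partial>\<nu>) - (\<integral>y. K (y - a) \<partial>\<mu>)) \<le> LK * enn2real (W1 \<mu> \<nu>)"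
proof -
  define D where "D = norm ((\<integral>y. K (y - a) \<partial>\<nu>) - (\<integral>y. K (y - a) \<partial>\<mu>))"
  have "ennreal (D / LK) \<le> (\<integral>\<^sup>+ p. ennreal (dist (fst p) (snd p)) \<partial>\<pi>)" if pi: "\<pi> \<in> couplings \<mu> \<nu>" for \<pi>
  proof -
    note I = K_int_coupling[OF pi m n, of a]
    define f where "f = (\<lambda>p. (1 / LK) *\<^sub>R (K (snd p - a) - K (fst p - a)))"
    have fi: "integrable \<pi> f" unfolding f_def using I(1,2) by auto
    have "(\<integral>p. f p \<partial>\<pi>) = (1 / LK) *\<^sub>R ((\<integral>y. K (y - a) \<partial>\<nu>) - (\<integral>y. K (y - a) \<partial>\<mu>))"
      unfolding f_def I(3,4) using I(1,2) by (simp add: Bochner_Integration.integral_diff)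
    then have "D / LK = norm (\<integral>p. f p \<partial>\<pi>)" unfolding D_def using LK by simp
    then have "ennreal (D / LK) \<le> (\<integral>\<^sup>+ p. ennreal (norm (f p)) \<partial>\<pi>)"
      using integral_norm_bound_ennreal[OF fi] by simp
    also have "\<dots> \<le> (\<integral>\<^sup>+ p. ennreal (dist (fst p) (snd p)) \<partial>\<pi>)"
    proof (rule nn_integral_mono)
      fix p :: "'a \<times> 'a"
      have "norm (K (snd p - a) - K (fst p - a)) \<le> LK * norm (snd p - fst p)"
        using K_lip[of "snd p - a" "fst p - a"] by simp
      moreover have "norm (f p) = norm (K (snd p - a) - K (fst p - a)) / LK"
        unfolding f_def using LK by simp
      ultimately have "norm (f p) \<le> norm (snd p - fst p)"
        using LK by (simp add: pos_divide_le_eq mult.commute)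
      then have "norm (f p) \<le> dist (fst p) (snd p)"
        by (simp add: dist_norm norm_minus_commute)
      then show "ennreal (norm (f p)) \<le> ennreal (dist (fst p) (snd p))" by simp
    qed
    finally show ?thesis .
  qed
  then have "ennreal (D / LK) \<le> W1 \<mu> \<nu>" unfolding W1_def by (rule INF_greatest)
  then have "enn2real (ennreal (D / LK)) \<le> enn2real (W1 \<mu> \<nu>)"
    using W1_finite[OF m n Npos] enn2real_mono by (simp add: top.not_eq_extremum)
  then have "D / LK \<le> enn2real (W1 \<mu> \<nu>)" unfolding D_def using LK by simp
  then show ?thesis unfolding D_def using LK by (simp add: field_simps)
qed

end



lemma inteq_diff:
  fixes f g :: "real \<Rightarrow> 'a::euclidean_space"
  assumes hi: "\<And>t. t \<in> {0..T} \<Longrightarrow> (f has_integral (g t - gi)) {0..t}"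
    and st: "0 \<le> s" "s \<le> t" "t \<le> T"
  shows "g t - g s = integral {s..t} f" "f integrable_on {s..t}"
proof -
  have it: "(f has_integral (g t - gi)) {0..t}" using hi st by auto
  have hs: "(f has_integral (g s - gi)) {0..s}" using hi st by auto
  have fi: "f integrable_on {0..t}" using it by auto
  show "f integrable_on {s..t}" using integrable_on_subinterval[OF fi] st by auto
  have "integral {0..s} f + integral {s..t} f = integral {0..t} f"
    using Henstock_Kurzweil_Integration.integral_combine[where a=0 and c=s and b=t and f=f] st fi by auto
  then show "g t - g s = integral {s..t} f"
    using integral_unique[OF it] integral_unique[OF hs] by (simp add: algebra_simps)
qed

context setting begin

lemma MK_nonneg: "MK \<ge> 0"
proof -
  have "0 \<le> norm (K 0)" by simp
  also have "\<dots> \<le> MK" by (rule MK)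
  finally show ?thesis .
qed

lemma vfield_bound:
  assumes m: "\<mu> \<in> M1 N"
  shows "norm (vfield vd K \<mu> p) \<le> (norm (vd 0) + N * MK) + Lv * norm p"
proof -
  interpret finite_measure \<mu> using M1_D[OF m] by simp
  have "norm (\<integral>y. K (y - p) \<partial>\<mu>) \<le> (\<integral>y. norm (K (y - p)) \<partial>\<mu>)" by (rule integral_norm_bound)
  also have "\<dots> \<le> (\<integral>y. MK \<partial>\<mu>)"
  proof (rule integral_mono)
    show "integrable \<mu> (\<lambda>y. norm (K (y - p)))" by (rule integrable_norm[OF K_int[OF m]])
    show "integrable \<mu> (\<lambda>y. MK)" by (rule integrable_const)
    show "norm (K (y - p)) \<le> MK" for y by (rule MK)
  qed
  also have "\<dots> = N * MK" using M1_measure[OF m] Npos M1_D(2)[OF m] by simp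
  finally have k: "norm (\<integral>y. K (y - p) \<partial>\<mu>) \<le> N * MK" .
  have v: "norm (vd p) \<le> norm (vd 0) + Lv * norm p"
    using vd_lip[of p 0] norm_triangle_ineq2[of "vd p" "vd 0"] by simp
  show ?thesis unfolding vfield_def using k v norm_triangle_ineq4[of "vd p" "\<integral>y. K (y - p) \<partial>\<mu>"] by simp
qed

lemma flow_zero:
  assumes sol: "is_solution N T vd K \<mu>bar \<mu> \<gamma>" and T: "T \<ge> 0"
  shows "\<gamma> 0 x = x"
proof -
  have "((\<lambda>s. vfield vd K (\<mu> s) (\<gamma> s x)) has_integral (\<gamma> 0 x - x)) {0..0}"
    using sol_D(5)[OF sol, of 0 x] T by simp
  then have h: "((\<lambda>s. vfield vd K (\<mu> s) (\<gamma> s x)) has_integral (\<gamma> 0 x - x)) {0}" by simp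
  have "\<gamma> 0 x - x = 0" by (rule has_integral_unique[OF h has_integral_refl(2)])
  then show ?thesis by simp
qed

lemma flow_growth:
  assumes sol: "is_solution N T vd K \<mu>bar \<mu> \<gamma>" and T: "T \<ge> 0" and t: "t \<in> {0..T}"
  shows "norm (\<gamma> t z) \<le> (norm z + (norm (vd 0) + N * MK) * T) * exp (Lv * T)"
proof -
  define A where "A = norm (vd 0) + N * MK"
  have A: "A \<ge> 0" unfolding A_def using Npos MK_nonneg by simp
  have "norm (\<gamma> t z) \<le> (norm z + integral {0..t} (\<lambda>_. A)) * exp (Lv * t)"
  proof (rule gron_vec[OF _ T Lv(1) _ _ _ t])
    show "((\<lambda>s. vfield vd K (\<mu> s) (\<gamma> s z)) has_integral (\<gamma> r z - z)) {0..r}" if "r \<in> {0..T}" for r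
      using sol_D(5)[OF sol that] .
    show "norm (vfield vd K (\<mu> s) (\<gamma> s z)) \<le> Lv * norm (\<gamma> s z) + A" if "s \<in> {0..T}" for s
      using vfield_bound[OF sol_D(2)[OF sol that], of "\<gamma> s z"] unfolding A_def by linarith
  qed (auto simp: A)
  also have "\<dots> = (norm z + A * t) * exp (Lv * t)" using t by simp
  also have "\<dots> \<le> (norm z + A * T) * exp (Lv * T)"
  proof (rule mult_mono)
    show "norm z + A * t \<le> norm z + A * T" using t A by (simp add: mult_left_mono)
    show "exp (Lv * t) \<le> exp (Lv * T)" using t Lv(1) by (simp add: mult_left_mono)
    show "0 \<le> norm z + A * T" using T A by simp
  qed simp
  finally show ?thesis unfolding A_def .
qed

lemma flow_time:
  assumes sol: "is_solution N T vd K \<mu>bar \<mu> \<gamma>" and st: "0 \<le> s" "s \<le> t" "t \<le> T"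
  shows "norm (\<gamma> t z - \<gamma> s z) \<le> (t - s) * ((norm (vd 0) + N * MK) + Lv * ((norm z + (norm (vd 0) + N * MK) * T) * exp (Lv * T)))"
proof -
  define B where "B = (norm (vd 0) + N * MK) + Lv * ((norm z + (norm (vd 0) + N * MK) * T) * exp (Lv * T))"
  have T: "T \<ge> 0" using st by simp
  have hi: "\<And>r. r \<in> {0..T} \<Longrightarrow> ((\<lambda>r. vfield vd K (\<mu> r) (\<gamma> r z)) has_integral (\<gamma> r z - z)) {0..r}"
    using sol_D(5)[OF sol] .
  note d = inteq_diff[OF hi st]
  have "norm (integral {s..t} (\<lambda>r. vfield vd K (\<mu> r) (\<gamma> r z))) \<le> integral {s..t} (\<lambda>_. B)"
  proof (rule integral_norm_bound_integral[OF d(2)])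
    fix r assume r: "r \<in> {s..t}"
    then have rT: "r \<in> {0..T}" using st by auto
    have "norm (vfield vd K (\<mu> r) (\<gamma> r z)) \<le> (norm (vd 0) + N * MK) + Lv * norm (\<gamma> r z)"
      by (rule vfield_bound[OF sol_D(2)[OF sol rT]])
    also have "\<dots> \<le> B" unfolding B_def
      using flow_growth[OF sol T rT, of z] Lv(1) by (intro add_left_mono mult_left_mono) auto
    finally show "norm (vfield vd K (\<mu> r) (\<gamma> r z)) \<le> B" .
  qed (use integrable_const_ivl in auto)
  then have "norm (\<gamma> t z - \<gamma> s z) \<le> integral {s..t} (\<lambda>_. B)" using d(1) by simp
  also have "\<dots> = (t - s) * B" using st by simp
  finally show ?thesis unfolding B_def .
qed

end



context setting begin

lemma flow_diff_int:
  assumes sol: "is_solution N T vd K \<mu>bar \<mu> \<gamma>" and r: "r \<in> {0..T}"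
  shows "((\<lambda>s. vfield vd K (\<mu> s) (\<gamma> s y) - vfield vd K (\<mu> s) (\<gamma> s x)) has_integral
           (\<gamma> r y - \<gamma> r x - (y - x))) {0..r}"
  using has_integral_diff[OF sol_D(5)[OF sol r, of y] sol_D(5)[OF sol r, of x]]
  by (simp add: algebra_simps)

lemma flow_inj:
  assumes sol: "is_solution N T vd K \<mu>bar \<mu> \<gamma>" and T: "T \<ge> 0" and t: "t \<in> {0..T}"
    and eq: "\<gamma> t x = \<gamma> t y"
  shows "x = y"
proof -
  define L where "L = Lv + N * LK"
  have L: "L \<ge> 0" unfolding L_def using Lv LK Npos by simp
  define G where "G = (\<lambda>r. \<gamma> r y - \<gamma> r x)"
  define F where "F = (\<lambda>s. vfield vd K (\<mu> s) (\<gamma> s y) - vfield vd K (\<mu> s) (\<gamma> s x))"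
  have hi: "\<And>r. r \<in> {0..T} \<Longrightarrow> (F has_integral (G r - (y - x))) {0..r}"
    unfolding F_def G_def by (rule flow_diff_int[OF sol])
  have Gc: "continuous_on {0..T} G" using inteq_cont(1)[OF hi T] .
  have uc: "continuous_on {0..t} (\<lambda>r. norm (G r))"
    using t by (intro continuous_intros continuous_on_subset[OF Gc]) auto
  have "norm (G 0) = 0"
  proof (rule gronwall_bwd_zero[OF uc L])
    show "0 \<in> {0..t}" using t by auto
    show "0 \<le> norm (G r)" for r by simp
    fix r assume r: "r \<in> {0..t}"
    note d = inteq_diff[OF hi, where s=r and t=t]
    have d1: "G t - G r = integral {r..t} F" and d2: "F integrable_on {r..t}"
      using d r t by auto
    have Gt: "G t = 0" unfolding G_def using eq by simp
    have ui: "(\<lambda>s. L * norm (G s)) integrable_on {r..t}"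
      using r t by (intro integrable_continuous_real continuous_intros continuous_on_subset[OF Gc]) auto
    have "integral {r..t} F = - G r" using d1 Gt by simp
    then have "norm (G r) = norm (integral {r..t} F)" by simp
    also have "\<dots> \<le> integral {r..t} (\<lambda>s. L * norm (G s))"
    proof (rule integral_norm_bound_integral[OF d2 ui])
      fix s assume s: "s \<in> {r..t}"
      then have sT: "s \<in> {0..T}" using r t by auto
      show "norm (F s) \<le> L * norm (G s)"
        unfolding F_def G_def L_def using vfield_lip[OF sol_D(2)[OF sol sT]] .
    qed
    also have "\<dots> = L * integral {r..t} (\<lambda>s. norm (G s))" by simp
    finally show "norm (G r) \<le> L * integral {r..t} (\<lambda>s. norm (G s))" .
  qed
  then show ?thesis unfolding G_def using flow_zero[OF sol T] by simp
qed

lemma flow_cont: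
  assumes sol: "is_solution N T vd K \<mu>bar \<mu> \<gamma>" and T: "T \<ge> 0" and t: "t \<in> {0..T}"
  shows "continuous_on UNIV (\<gamma> t)"
proof -
  have "(exp ((Lv + N * LK) * t))-lipschitz_on UNIV (\<gamma> t)"
  proof (rule lipschitz_onI)
    fix x y :: 'a
    show "dist (\<gamma> t x) (\<gamma> t y) \<le> exp ((Lv + N * LK) * t) * dist x y"
      using flow_lip[OF sol T t, of x y] by (simp add: dist_norm)
  qed simp
  then show ?thesis by (rule lipschitz_on_continuous_on)
qed

lemma flow_factor:
  assumes sol: "is_solution N T vd K \<mu>bar \<mu> \<gamma>" and T: "T \<ge> 0" and t: "t \<in> {0..T}" and s: "s \<in> {0..T}"
  obtains \<Phi> where "\<Phi> \<in> borel_measurable borel" "\<And>z. \<Phi> (\<gamma> t z) = \<gamma> s z"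
proof -
  define U where "U = range (\<gamma> t)"
  define g where "g = inv_into UNIV (\<gamma> t)"
  have inj: "inj (\<gamma> t)" using flow_inj[OF sol T t] by (auto intro: injI)
  have gf: "g (\<gamma> t x) = x" for x unfolding g_def using inj by simp
  have ct: "continuous_on UNIV (\<gamma> t)" by (rule flow_cont[OF sol T t])
  have cs: "continuous_on UNIV (\<gamma> s)" by (rule flow_cont[OF sol T s])
  have oU: "open U" unfolding U_def
    by (rule invariance_of_domain_gen) (use ct inj in auto)
  have cg: "continuous_on U g" unfolding U_def
    by (rule continuous_on_inverse_open) (use ct gf in auto)
  have cgs: "continuous_on U (\<lambda>a. \<gamma> s (g a))"
    by (rule continuous_on_compose2[OF cs cg]) auto
  define \<Phi> where "\<Phi> = (\<lambda>a. indicator U a *\<^sub>R \<gamma> s (g a))"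
  have "\<Phi> \<in> borel_measurable borel" unfolding \<Phi>_def
    by (rule borel_measurable_continuous_on_indicator[OF _ cgs]) (use oU in auto)
  moreover have "\<Phi> (\<gamma> t z) = \<gamma> s z" for z unfolding \<Phi>_def U_def by (simp add: gf)
  ultimately show ?thesis using that by blast
qed

end



lemma meas_cong_borel:
  assumes "sets M = sets borel" "f \<in> borel_measurable borel"
  shows "f \<in> borel_measurable M"
  by (subst measurable_cong_sets[OF assms(1) refl]) (rule assms(2))

lemma nn_distr_borel:
  assumes h: "h \<in> measurable M borel" and f: "f \<in> borel_measurable borel"
  shows "(\<integral>\<^sup>+ x. f x \<partial>distr M borel h) = (\<integral>\<^sup>+ x. f (h x) \<partial>M)"
proof -
  have "f \<in> borel_measurable (distr M borel h)"
    by (subst measurable_cong_sets[OF sets_distr refl]) (rule f)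
  then show ?thesis by (rule nn_integral_distr[OF h])
qed

lemma norm_diff_borel: "(\<lambda>x. ennreal (norm (\<Phi> x - x))) \<in> borel_measurable borel"
  if "\<Phi> \<in> borel_measurable borel" for \<Phi> :: "'a::euclidean_space \<Rightarrow> 'a"
  using that by measurable

lemma transport_cost:
  fixes \<Phi> \<Psi> gt ht gs hs :: "'a::euclidean_space \<Rightarrow> 'a"
  assumes pi: "\<pi> \<in> couplings (distr \<mu>b borel gt) (distr \<nu>b borel ht)"
    and sm: "sets \<mu>b = sets borel" and sn: "sets \<nu>b = sets borel"
    and m: "\<Phi> \<in> borel_measurable borel" "\<Psi> \<in> borel_measurable borel"
      "gt \<in> borel_measurable borel" "ht \<in> borel_measurable borel"
      "gs \<in> borel_measurable borel" "hs \<in> borel_measurable borel"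
    and fg: "\<And>z. \<Phi> (gt z) = gs z" and fh: "\<And>z. \<Psi> (ht z) = hs z"
  shows "distr \<pi> borel (\<lambda>p. (\<Phi> (fst p), \<Psi> (snd p))) \<in> couplings (distr \<mu>b borel gs) (distr \<nu>b borel hs)"
    "(\<integral>\<^sup>+ p. ennreal (dist (fst p) (snd p)) \<partial>distr \<pi> borel (\<lambda>p. (\<Phi> (fst p), \<Psi> (snd p))))
      \<le> (\<integral>\<^sup>+ p. ennreal (dist (fst p) (snd p)) \<partial>\<pi>)
         + (\<integral>\<^sup>+ z. ennreal (norm (gs z - gt z)) \<partial>\<mu>b) + (\<integral>\<^sup>+ z. ennreal (norm (hs z - ht z)) \<partial>\<nu>b)"
proof -
  note c = coupling_D[OF pi]
  define F where "F = (\<lambda>p. (\<Phi> (fst p), \<Psi> (snd p)))"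
  have Fm: "F \<in> measurable \<pi> borel" unfolding F_def
    using measurable_compose[OF c(4) m(1)] measurable_compose[OF c(5) m(2)]
    by (intro borel_measurable_Pair) (auto simp: comp_def)
  have gtm: "gt \<in> measurable \<mu>b borel" by (rule meas_cong_borel[OF sm m(3)])
  have htm: "ht \<in> measurable \<nu>b borel" by (rule meas_cong_borel[OF sn m(4)])
  have gsm: "gs \<in> measurable \<mu>b borel" by (rule meas_cong_borel[OF sm m(5)])
  have hsm: "hs \<in> measurable \<nu>b borel" by (rule meas_cong_borel[OF sn m(6)])
  have ffst: "distr (distr \<pi> borel F) borel fst = distr \<mu>b borel gs"
  proof -
    have "distr (distr \<pi> borel F) borel fst = distr \<pi> borel (fst \<circ> F)"
      by (rule distr_distr[OF fst_borel Fm])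
    also have "fst \<circ> F = \<Phi> \<circ> fst" unfolding F_def by auto
    also have "distr \<pi> borel (\<Phi> \<circ> fst) = distr (distr \<pi> borel fst) borel \<Phi>"
      by (rule distr_distr[symmetric, OF m(1) c(4)])
    also have "\<dots> = distr (distr \<mu>b borel gt) borel \<Phi>" unfolding c(2) ..
    also have "\<dots> = distr \<mu>b borel (\<Phi> \<circ> gt)" by (rule distr_distr[OF m(1) gtm])
    also have "\<Phi> \<circ> gt = gs" using fg by auto
    finally show ?thesis .
  qed
  have fsnd: "distr (distr \<pi> borel F) borel snd = distr \<nu>b borel hs"
  proof -
    have "distr (distr \<pi> borel F) borel snd = distr \<pi> borel (snd \<circ> F)"
      by (rule distr_distr[OF snd_borel Fm])
    also have "snd \<circ> F = \<Psi> \<circ> snd" unfolding F_def by auto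
    also have "distr \<pi> borel (\<Psi> \<circ> snd) = distr (distr \<pi> borel snd) borel \<Psi>"
      by (rule distr_distr[symmetric, OF m(2) c(5)])
    also have "\<dots> = distr (distr \<nu>b borel ht) borel \<Psi>" unfolding c(3) ..
    also have "\<dots> = distr \<nu>b borel (\<Psi> \<circ> ht)" by (rule distr_distr[OF m(2) htm])
    also have "\<Psi> \<circ> ht = hs" using fh by auto
    finally show ?thesis .
  qed
  show "distr \<pi> borel (\<lambda>p. (\<Phi> (fst p), \<Psi> (snd p))) \<in> couplings (distr \<mu>b borel gs) (distr \<nu>b borel hs)"
    unfolding F_def[symmetric] couplings_def using ffst fsnd by simp
  have dm: "(\<lambda>p. ennreal (dist (fst p) (snd p))) \<in> borel_measurable (borel :: ('a \<times> 'a) measure)"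
    by measurable
  have "(\<integral>\<^sup>+ p. ennreal (dist (fst p) (snd p)) \<partial>distr \<pi> borel F)
       = (\<integral>\<^sup>+ p. ennreal (dist (\<Phi> (fst p)) (\<Psi> (snd p))) \<partial>\<pi>)"
    using nn_distr_borel[OF Fm dm] unfolding F_def by simp
  also have "\<dots> \<le> (\<integral>\<^sup>+ p. ennreal (dist (fst p) (snd p)) + (ennreal (norm (\<Phi> (fst p) - fst p)) + ennreal (norm (\<Psi> (snd p) - snd p))) \<partial>\<pi>)"
  proof (rule nn_integral_mono)
    fix p :: "'a \<times> 'a"
    have "dist (\<Phi> (fst p)) (\<Psi> (snd p)) \<le> dist (fst p) (snd p) + (norm (\<Phi> (fst p) - fst p) + norm (\<Psi> (snd p) - snd p))"
    proof -
      have "\<Phi> (fst p) - \<Psi> (snd p) = (fst p - snd p) + ((\<Phi> (fst p) - fst p) - (\<Psi> (snd p) - snd p))"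
        by (simp add: algebra_simps)
      then have "norm (\<Phi> (fst p) - \<Psi> (snd p)) \<le> norm (fst p - snd p) + norm ((\<Phi> (fst p) - fst p) - (\<Psi> (snd p) - snd p))"
        by (metis norm_triangle_ineq)
      also have "norm ((\<Phi> (fst p) - fst p) - (\<Psi> (snd p) - snd p)) \<le> norm (\<Phi> (fst p) - fst p) + norm (\<Psi> (snd p) - snd p)"
        by (rule norm_triangle_ineq4)
      finally show ?thesis by (simp add: dist_norm)
    qed
    then show "ennreal (dist (\<Phi> (fst p)) (\<Psi> (snd p))) \<le> ennreal (dist (fst p) (snd p)) + (ennreal (norm (\<Phi> (fst p) - fst p)) + ennreal (norm (\<Psi> (snd p) - snd p)))"
      by (simp add: ennreal_plus[symmetric] del: ennreal_plus)
  qed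
  also have "\<dots> = (\<integral>\<^sup>+ p. ennreal (dist (fst p) (snd p)) \<partial>\<pi>) + ((\<integral>\<^sup>+ p. ennreal (norm (\<Phi> (fst p) - fst p)) \<partial>\<pi>) + (\<integral>\<^sup>+ p. ennreal (norm (\<Psi> (snd p) - snd p)) \<partial>\<pi>))"
  proof -
    have m1: "(\<lambda>p. ennreal (dist (fst p) (snd p))) \<in> borel_measurable \<pi>"
      by (rule meas_cong_borel[OF c(1) dm])
    have m2: "(\<lambda>p. ennreal (norm (\<Phi> (fst p) - fst p))) \<in> borel_measurable \<pi>"
      by (rule meas_cong_borel[OF c(1)]) (use m(1) in measurable)
    have m3: "(\<lambda>p. ennreal (norm (\<Psi> (snd p) - snd p))) \<in> borel_measurable \<pi>"
      by (rule meas_cong_borel[OF c(1)]) (use m(2) in measurable)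
    show ?thesis using m1 m2 m3 by (simp add: nn_integral_add)
  qed
  also have "(\<integral>\<^sup>+ p. ennreal (norm (\<Phi> (fst p) - fst p)) \<partial>\<pi>) = (\<integral>\<^sup>+ z. ennreal (norm (gs z - gt z)) \<partial>\<mu>b)"
  proof -
    have "(\<integral>\<^sup>+ p. ennreal (norm (\<Phi> (fst p) - fst p)) \<partial>\<pi>) = (\<integral>\<^sup>+ a. ennreal (norm (\<Phi> a - a)) \<partial>distr \<pi> borel fst)"
      by (rule nn_distr_borel[OF c(4) norm_diff_borel[OF m(1)], symmetric])
    also have "\<dots> = (\<integral>\<^sup>+ z. ennreal (norm (\<Phi> (gt z) - gt z)) \<partial>\<mu>b)"
      unfolding c(2) by (rule nn_distr_borel[OF gtm norm_diff_borel[OF m(1)]])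
    finally show ?thesis using fg by simp
  qed
  also have "(\<integral>\<^sup>+ p. ennreal (norm (\<Psi> (snd p) - snd p)) \<partial>\<pi>) = (\<integral>\<^sup>+ z. ennreal (norm (hs z - ht z)) \<partial>\<nu>b)"
  proof -
    have "(\<integral>\<^sup>+ p. ennreal (norm (\<Psi> (snd p) - snd p)) \<partial>\<pi>) = (\<integral>\<^sup>+ a. ennreal (norm (\<Psi> a - a)) \<partial>distr \<pi> borel snd)"
      by (rule nn_distr_borel[OF c(5) norm_diff_borel[OF m(2)], symmetric])
    also have "\<dots> = (\<integral>\<^sup>+ z. ennreal (norm (\<Psi> (ht z) - ht z)) \<partial>\<nu>b)"
      unfolding c(3) by (rule nn_distr_borel[OF htm norm_diff_borel[OF m(2)]])
    finally show ?thesis using fh by simp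
  qed
  finally show "(\<integral>\<^sup>+ p. ennreal (dist (fst p) (snd p)) \<partial>distr \<pi> borel (\<lambda>p. (\<Phi> (fst p), \<Psi> (snd p))))
      \<le> (\<integral>\<^sup>+ p. ennreal (dist (fst p) (snd p)) \<partial>\<pi>)
         + (\<integral>\<^sup>+ z. ennreal (norm (gs z - gt z)) \<partial>\<mu>b) + (\<integral>\<^sup>+ z. ennreal (norm (hs z - ht z)) \<partial>\<nu>b)"
    unfolding F_def by (simp add: add.assoc)
qed




context setting begin

definition "cA = norm (vd 0) + N * MK"
definition "c0 T = cA + Lv * (cA * T) * exp (Lv * T)"
definition "c1 T = Lv * exp (Lv * T)"

lemma cA_nonneg: "cA \<ge> 0" unfolding cA_def using Npos MK_nonneg by simp

lemma c0_nonneg: "T \<ge> 0 \<Longrightarrow> c0 T \<ge> 0"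
  unfolding c0_def using cA_nonneg Lv(1) by auto

lemma c1_nonneg: "c1 T \<ge> 0"
  unfolding c1_def using Lv(1) by auto

lemma flow_time_abs:
  assumes sol: "is_solution N T vd K \<mu>bar \<mu> \<gamma>" and s: "s \<in> {0..T}" and t: "t \<in> {0..T}"
  shows "norm (\<gamma> s z - \<gamma> t z) \<le> \<bar>t - s\<bar> * (c0 T + c1 T * norm z)"
proof -
  have e: "cA + Lv * ((norm z + cA * T) * exp (Lv * T)) = c0 T + c1 T * norm z"
    unfolding c0_def c1_def by (simp add: algebra_simps)
  show ?thesis
  proof (cases "s \<le> t")
    case True
    have "norm (\<gamma> t z - \<gamma> s z) \<le> (t - s) * (c0 T + c1 T * norm z)"
      using flow_time[OF sol, of s t z] s t True e unfolding cA_def by simp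
    then show ?thesis using True by (simp add: norm_minus_commute)
  next
    case False
    have "norm (\<gamma> s z - \<gamma> t z) \<le> (s - t) * (c0 T + c1 T * norm z)"
      using flow_time[OF sol, of t s z] s t False e unfolding cA_def by simp
    then show ?thesis using False by simp
  qed
qed

lemma D_bound:
  assumes sol: "is_solution N T vd K \<mu>bar \<mu> \<gamma>" and s: "s \<in> {0..T}" and t: "t \<in> {0..T}"
  shows "(\<integral>\<^sup>+ z. ennreal (norm (\<gamma> s z - \<gamma> t z)) \<partial>\<mu>bar)
     \<le> ennreal (\<bar>t - s\<bar> * (c0 T * N + c1 T * (\<integral>z. norm z \<partial>\<mu>bar)))"
proof -
  have mb: "\<mu>bar \<in> M1 N" by (rule sol_D(1)[OF sol])
  interpret finite_measure \<mu>bar using M1_D[OF mb] by simp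
  have T: "T \<ge> 0" using s by simp
  define f where "f = (\<lambda>z::'a. \<bar>t - s\<bar> * (c0 T + c1 T * norm z))"
  have fi: "integrable \<mu>bar f" unfolding f_def
    using M1_D(5)[OF mb] by auto
  have "(\<integral>\<^sup>+ z. ennreal (norm (\<gamma> s z - \<gamma> t z)) \<partial>\<mu>bar) \<le> (\<integral>\<^sup>+ z. ennreal (f z) \<partial>\<mu>bar)"
  proof (rule nn_integral_mono)
    fix z show "ennreal (norm (\<gamma> s z - \<gamma> t z)) \<le> ennreal (f z)"
      unfolding f_def by (rule ennreal_leI) (rule flow_time_abs[OF sol s t])
  qed
  also have "\<dots> = ennreal (\<integral>z. f z \<partial>\<mu>bar)"
    by (rule nn_integral_eq_integral[OF fi]) (use c0_nonneg[OF T] c1_nonneg in \<open>simp add: f_def\<close>)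
  also have "(\<integral>z. f z \<partial>\<mu>bar) = \<bar>t - s\<bar> * (c0 T * N + c1 T * (\<integral>z. norm z \<partial>\<mu>bar))"
    unfolding f_def using M1_D(5)[OF mb] M1_measure[OF mb] Npos M1_D(2)[OF mb]
    by (simp add: algebra_simps)
  finally show ?thesis .
qed

end



context setting begin

lemma W1_step:
  assumes solm: "is_solution N T vd K \<mu>bar \<mu> \<gamma>" and soln: "is_solution N T vd K \<nu>bar \<nu> \<eta>"
    and s: "s \<in> {0..T}" and t: "t \<in> {0..T}"
  shows "W1 (\<mu> s) (\<nu> s) \<le> W1 (\<mu> t) (\<nu> t) + (\<integral>\<^sup>+ z. ennreal (norm (\<gamma> s z - \<gamma> t z)) \<partial>\<mu>bar)
           + (\<integral>\<^sup>+ z. ennreal (norm (\<eta> s z - \<eta> t z)) \<partial>\<nu>bar)"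
proof -
  have T: "T \<ge> 0" using s by simp
  obtain \<Phi> where \<Phi>: "\<Phi> \<in> borel_measurable borel" "\<And>z. \<Phi> (\<gamma> t z) = \<gamma> s z"
    using flow_factor[OF solm T t s] by metis
  obtain \<Psi> where \<Psi>: "\<Psi> \<in> borel_measurable borel" "\<And>z. \<Psi> (\<eta> t z) = \<eta> s z"
    using flow_factor[OF soln T t s] by metis
  define Dm where "Dm = (\<integral>\<^sup>+ z. ennreal (norm (\<gamma> s z - \<gamma> t z)) \<partial>\<mu>bar)"
  define Dn where "Dn = (\<integral>\<^sup>+ z. ennreal (norm (\<eta> s z - \<eta> t z)) \<partial>\<nu>bar)"
  have fin: "W1 (\<mu> t) (\<nu> t) < top"
    using W1_finite[OF sol_D(2)[OF solm t] sol_D(2)[OF soln t] Npos] by simp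
  show ?thesis unfolding Dm_def[symmetric] Dn_def[symmetric]
  proof (rule ennreal_le_epsilon)
    fix e :: real assume e: "0 < e"
    define w where "w = enn2real (W1 (\<mu> t) (\<nu> t))"
    have ww: "W1 (\<mu> t) (\<nu> t) = ennreal w" unfolding w_def using fin by simp
    have "W1 (\<mu> t) (\<nu> t) < W1 (\<mu> t) (\<nu> t) + ennreal e"
      unfolding ww using e by (simp add: ennreal_plus[symmetric] del: ennreal_plus)
    then obtain \<pi> where pi: "\<pi> \<in> couplings (\<mu> t) (\<nu> t)"
      and cp: "(\<integral>\<^sup>+ p. ennreal (dist (fst p) (snd p)) \<partial>\<pi>) < W1 (\<mu> t) (\<nu> t) + ennreal e"
      unfolding W1_def[of "\<mu> t" "\<nu> t"] INF_less_iff by (auto simp: W1_def)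
    have pi': "\<pi> \<in> couplings (distr \<mu>bar borel (\<gamma> t)) (distr \<nu>bar borel (\<eta> t))"
      using pi sol_D(4)[OF solm t] sol_D(4)[OF soln t] by simp
    note tc = transport_cost[OF pi' M1_D(1)[OF sol_D(1)[OF solm]] M1_D(1)[OF sol_D(1)[OF soln]]
        \<Phi>(1) \<Psi>(1) sol_D(3)[OF solm t] sol_D(3)[OF soln t] sol_D(3)[OF solm s] sol_D(3)[OF soln s] \<Phi>(2) \<Psi>(2)]
    have c': "distr \<pi> borel (\<lambda>p. (\<Phi> (fst p), \<Psi> (snd p))) \<in> couplings (\<mu> s) (\<nu> s)"
      using tc(1) sol_D(4)[OF solm s] sol_D(4)[OF soln s] by simp
    have "W1 (\<mu> s) (\<nu> s) \<le> (\<integral>\<^sup>+ p. ennreal (dist (fst p) (snd p)) \<partial>distr \<pi> borel (\<lambda>p. (\<Phi> (fst p), \<Psi> (snd p))))"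
      by (rule W1_le[OF c'])
    also have "\<dots> \<le> (\<integral>\<^sup>+ p. ennreal (dist (fst p) (snd p)) \<partial>\<pi>) + Dm + Dn"
      using tc(2) unfolding Dm_def Dn_def .
    also have "\<dots> \<le> (W1 (\<mu> t) (\<nu> t) + ennreal e) + Dm + Dn"
      using cp by (intro add_right_mono) simp
    also have "\<dots> = W1 (\<mu> t) (\<nu> t) + Dm + Dn + ennreal e" by (simp add: ac_simps)
    finally show "W1 (\<mu> s) (\<nu> s) \<le> W1 (\<mu> t) (\<nu> t) + Dm + Dn + ennreal e" .
  qed
qed

definition "Cw T \<mu>bar \<nu>bar = (c0 T * N + c1 T * (\<integral>z. norm z \<partial>\<mu>bar)) + (c0 T * N + c1 T * (\<integral>z. norm z \<partial>\<nu>bar))"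

lemma w_step:
  assumes solm: "is_solution N T vd K \<mu>bar \<mu> \<gamma>" and soln: "is_solution N T vd K \<nu>bar \<nu> \<eta>"
    and s: "s \<in> {0..T}" and t: "t \<in> {0..T}"
  shows "enn2real (W1 (\<mu> s) (\<nu> s)) \<le> enn2real (W1 (\<mu> t) (\<nu> t)) + \<bar>t - s\<bar> * Cw T \<mu>bar \<nu>bar"
proof -
  have T: "T \<ge> 0" using s by simp
  define Mm where "Mm = c0 T * N + c1 T * (\<integral>z. norm z \<partial>\<mu>bar)"
  define Mn where "Mn = c0 T * N + c1 T * (\<integral>z. norm z \<partial>\<nu>bar)"
  have Mm: "Mm \<ge> 0" unfolding Mm_def using c0_nonneg[OF T] c1_nonneg Npos by simp
  have Mn: "Mn \<ge> 0" unfolding Mn_def using c0_nonneg[OF T] c1_nonneg Npos by simp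
  have fin: "W1 (\<mu> t) (\<nu> t) < top"
    using W1_finite[OF sol_D(2)[OF solm t] sol_D(2)[OF soln t] Npos] by simp
  define w where "w = enn2real (W1 (\<mu> t) (\<nu> t))"
  have w: "w \<ge> 0" unfolding w_def by simp
  have ww: "W1 (\<mu> t) (\<nu> t) = ennreal w" unfolding w_def using fin by simp
  have "W1 (\<mu> s) (\<nu> s) \<le> W1 (\<mu> t) (\<nu> t) + ennreal (\<bar>t - s\<bar> * Mm) + ennreal (\<bar>t - s\<bar> * Mn)"
    using W1_step[OF solm soln s t] D_bound[OF solm s t] D_bound[OF soln s t]
    unfolding Mm_def Mn_def by (meson add_mono order_trans order_refl)
  also have "\<dots> = ennreal (w + \<bar>t - s\<bar> * Mm + \<bar>t - s\<bar> * Mn)"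
    unfolding ww using w Mm Mn by (simp add: ennreal_plus[symmetric] del: ennreal_plus)
  finally have "enn2real (W1 (\<mu> s) (\<nu> s)) \<le> enn2real (ennreal (w + \<bar>t - s\<bar> * Mm + \<bar>t - s\<bar> * Mn))"
    by (rule enn2real_mono) simp
  also have "\<dots> = w + \<bar>t - s\<bar> * Mm + \<bar>t - s\<bar> * Mn"
    by (rule enn2real_ennreal) (use w Mm Mn in simp)
  finally show ?thesis unfolding Cw_def Mm_def[symmetric] Mn_def[symmetric] w_def
    by (simp add: algebra_simps)
qed

lemma w_cont:
  assumes solm: "is_solution N T vd K \<mu>bar \<mu> \<gamma>" and soln: "is_solution N T vd K \<nu>bar \<nu> \<eta>"
  shows "continuous_on {0..T} (\<lambda>s. enn2real (W1 (\<mu> s) (\<nu> s)))"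
proof -
  have "(\<bar>Cw T \<mu>bar \<nu>bar\<bar>)-lipschitz_on {0..T} (\<lambda>s. enn2real (W1 (\<mu> s) (\<nu> s)))"
  proof (rule lipschitz_onI)
    fix a b assume a: "a \<in> {0..T}" and b: "b \<in> {0..T}"
    have 1: "enn2real (W1 (\<mu> a) (\<nu> a)) \<le> enn2real (W1 (\<mu> b) (\<nu> b)) + \<bar>b - a\<bar> * Cw T \<mu>bar \<nu>bar"
      by (rule w_step[OF solm soln a b])
    have 2: "enn2real (W1 (\<mu> b) (\<nu> b)) \<le> enn2real (W1 (\<mu> a) (\<nu> a)) + \<bar>a - b\<bar> * Cw T \<mu>bar \<nu>bar"
      by (rule w_step[OF solm soln b a])
    have 3: "\<bar>b - a\<bar> * Cw T \<mu>bar \<nu>bar \<le> \<bar>Cw T \<mu>bar \<nu>bar\<bar> * dist a b"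
      unfolding dist_real_def by (metis abs_ge_self abs_ge_zero abs_minus_commute mult.commute mult_left_mono)
    have 4: "\<bar>a - b\<bar> * Cw T \<mu>bar \<nu>bar \<le> \<bar>Cw T \<mu>bar \<nu>bar\<bar> * dist a b"
      unfolding dist_real_def by (metis abs_ge_self abs_ge_zero mult.commute mult_left_mono)
    show "dist (enn2real (W1 (\<mu> a) (\<nu> a))) (enn2real (W1 (\<mu> b) (\<nu> b))) \<le> \<bar>Cw T \<mu>bar \<nu>bar\<bar> * dist a b"
      using 1 2 3 4 unfolding dist_real_def by linarith
  qed simp
  then show ?thesis by (rule lipschitz_on_continuous_on)
qed

end



context setting begin

lemma part2:
  assumes solm: "is_solution N T vd K \<mu>bar \<mu> \<gamma>" and soln: "is_solution N T vd K \<nu>bar \<nu> \<eta>"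
    and t: "t \<in> {0..T}"
  shows "norm (\<eta> t x - \<gamma> t x) \<le> (LK * integral {0..t} (\<lambda>s. enn2real (W1 (\<mu> s) (\<nu> s)))) * exp ((Lv + N * LK) * t)"
proof -
  have T: "T \<ge> 0" using t by simp
  define w where "w = (\<lambda>s. enn2real (W1 (\<mu> s) (\<nu> s)))"
  have wc: "continuous_on {0..T} w" unfolding w_def by (rule w_cont[OF solm soln])
  have "norm (\<eta> t x - \<gamma> t x) \<le> (norm (0::'a) + integral {0..t} (\<lambda>s. LK * w s)) * exp ((Lv + N * LK) * t)"
  proof (rule gron_vec[OF _ T _ _ _ _ t])
    fix r assume r: "r \<in> {0..T}"
    show "((\<lambda>s. vfield vd K (\<nu> s) (\<eta> s x) - vfield vd K (\<mu> s) (\<gamma> s x)) has_integral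
           (\<eta> r x - \<gamma> r x - 0)) {0..r}"
      using has_integral_diff[OF sol_D(5)[OF soln r, of x] sol_D(5)[OF solm r, of x]]
      by (simp add: algebra_simps)
  next
    show "0 \<le> Lv + N * LK" using Lv LK Npos by simp
  next
    show "(\<lambda>s. LK * w s) integrable_on {0..T}"
      by (intro integrable_continuous_real continuous_intros wc)
  next
    show "0 \<le> LK * w s" for s unfolding w_def using LK by simp
  next
    fix s assume s: "s \<in> {0..T}"
    have ms: "\<mu> s \<in> M1 N" and ns: "\<nu> s \<in> M1 N" using sol_D(2)[OF solm s] sol_D(2)[OF soln s] by auto
    define a where "a = \<eta> s x"
    define b where "b = \<gamma> s x"
    have "vfield vd K (\<nu> s) a - vfield vd K (\<mu> s) b
       = (vd a - vd b) - (((\<integral>y. K (y - a) \<partial>\<nu> s) - (\<integral>y. K (y - a) \<partial>\<mu> s))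
           + ((\<integral>y. K (y - a) \<partial>\<mu> s) - (\<integral>y. K (y - b) \<partial>\<mu> s)))"
      by (simp add: vfield_def algebra_simps)
    also have "norm \<dots> \<le> norm (vd a - vd b) + (norm ((\<integral>y. K (y - a) \<partial>\<nu> s) - (\<integral>y. K (y - a) \<partial>\<mu> s))
           + norm ((\<integral>y. K (y - a) \<partial>\<mu> s) - (\<integral>y. K (y - b) \<partial>\<mu> s)))"
      by (rule order_trans[OF norm_triangle_ineq4 add_left_mono[OF norm_triangle_ineq]])
    also have "\<dots> \<le> Lv * norm (a - b) + (LK * w s + N * LK * norm (a - b))"
      unfolding w_def by (intro add_mono vd_lip K_W1[OF ms ns] K_diff[OF ms])
    finally show "norm (vfield vd K (\<nu> s) (\<eta> s x) - vfield vd K (\<mu> s) (\<gamma> s x))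
        \<le> (Lv + N * LK) * norm (\<eta> s x - \<gamma> s x) + LK * w s"
      unfolding a_def b_def by (simp add: algebra_simps)
  qed
  then show ?thesis unfolding w_def by simp
qed

end

theorem mainTheorem4:
  fixes vd K :: "'a::euclidean_space \<Rightarrow> 'a" and N :: nat and T Lv LK :: real
  assumes "N \<ge> 1" and "T > 0"
    and "Lv > 0" and "Lv-lipschitz_on UNIV vd"
    and "LK > 0" and "LK-lipschitz_on UNIV K"
    and "compact (closure {x. K x \<noteq> 0})"
  defines "\<xi> \<equiv> 2 * max Lv (real N * LK)"
  shows "(\<forall>\<mu>bar \<mu> \<gamma>. is_solution (real N) T vd K \<mu>bar \<mu> \<gamma> \<longrightarrow>
            (\<forall>x y. \<forall>t\<in>{0..T}. norm (\<gamma> t y - \<gamma> t x) \<le> exp (\<xi> * t) * norm (y - x)))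
       \<and> (\<forall>\<mu>bar \<mu> \<gamma> \<nu>bar \<nu> \<eta>.
            is_solution (real N) T vd K \<mu>bar \<mu> \<gamma> \<and> is_solution (real N) T vd K \<nu>bar \<nu> \<eta> \<longrightarrow>
            (\<forall>x. \<forall>t\<in>{0..T}. norm (\<eta> t x - \<gamma> t x)
               \<le> \<xi> * exp (\<xi> * t) / real N * integral {0..t} (\<lambda>s. enn2real (W1 (\<mu> s) (\<nu> s)))))"
proof -
  obtain B where B: "\<And>x. x \<in> closure {x. K x \<noteq> 0} \<Longrightarrow> norm (K x) \<le> B"
  proof -
    have c: "continuous_on UNIV K" by (rule lipschitz_on_continuous_on[OF assms(6)])
    have "continuous_on (closure {x. K x \<noteq> 0}) K" by (rule continuous_on_subset[OF c]) simp
    then have "compact (K ` closure {x. K x \<noteq> 0})"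
      using assms(7) by (rule compact_continuous_image)
    then have "bounded (K ` closure {x. K x \<noteq> 0})" by (rule compact_imp_bounded)
    then show ?thesis using that unfolding bounded_iff by auto
  qed
  define MK where "MK = max B 0"
  have MK: "norm (K x) \<le> MK" for x
  proof (cases "K x = 0")
    case True then show ?thesis unfolding MK_def by simp
  next
    case False
    then have "x \<in> closure {x. K x \<noteq> 0}" by (intro subsetD[OF closure_subset]) simp
    then show ?thesis unfolding MK_def by (rule order_trans[OF B max.cobounded1])
  qed
  interpret S: setting vd K "real N" Lv LK MK
    using assms(1,3,4,5,6) MK by unfold_locales auto
  have NL: "0 \<le> real N * LK" using assms(5) by simp
  have xi: "Lv + real N * LK \<le> \<xi>" unfolding \<xi>_def
    using max.cobounded1[of Lv "real N * LK"] max.cobounded2[of "real N * LK" Lv] by linarith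
  have Nr: "real N \<ge> 1" using assms(1) by simp
  have xiN: "LK \<le> \<xi> / real N"
  proof -
    have "real N * LK \<le> \<xi>" unfolding \<xi>_def
      using max.cobounded2[of "real N * LK" Lv] NL by linarith
    then show ?thesis using Nr by (simp add: field_simps)
  qed
  show ?thesis
  proof (intro conjI allI impI ballI)
    fix \<mu>bar \<mu> \<gamma> x y t
    assume sol: "is_solution (real N) T vd K \<mu>bar \<mu> \<gamma>" and t: "t \<in> {0..T}"
    have "norm (\<gamma> t y - \<gamma> t x) \<le> exp ((Lv + real N * LK) * t) * norm (y - x)"
      using S.flow_lip[OF sol _ t] assms(2) by simp
    also have "\<dots> \<le> exp (\<xi> * t) * norm (y - x)"
    proof (rule mult_right_mono)
      have "(Lv + real N * LK) * t \<le> \<xi> * t" using xi t by (intro mult_right_mono) auto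
      then show "exp ((Lv + real N * LK) * t) \<le> exp (\<xi> * t)" by simp
    qed simp
    finally show "norm (\<gamma> t y - \<gamma> t x) \<le> exp (\<xi> * t) * norm (y - x)" .
  next
    fix \<mu>bar \<mu> \<gamma> \<nu>bar \<nu> \<eta> x t
    assume sols: "is_solution (real N) T vd K \<mu>bar \<mu> \<gamma> \<and> is_solution (real N) T vd K \<nu>bar \<nu> \<eta>"
      and t: "t \<in> {0..T}"
    then have solm: "is_solution (real N) T vd K \<mu>bar \<mu> \<gamma>" and soln: "is_solution (real N) T vd K \<nu>bar \<nu> \<eta>"
      by auto
    define I where "I = integral {0..t} (\<lambda>s. enn2real (W1 (\<mu> s) (\<nu> s)))"
    have I: "I \<ge> 0" unfolding I_def
    proof (rule integral_nonneg)
      show "(\<lambda>s. enn2real (W1 (\<mu> s) (\<nu> s))) integrable_on {0..t}"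
        using t by (intro integrable_continuous_real continuous_on_subset[OF S.w_cont[OF solm soln]]) auto
    qed simp
    have "norm (\<eta> t x - \<gamma> t x) \<le> (LK * I) * exp ((Lv + real N * LK) * t)"
      using S.part2[OF solm soln t] unfolding I_def .
    also have "\<dots> \<le> ((\<xi> / real N) * I) * exp (\<xi> * t)"
    proof (rule mult_mono)
      show "LK * I \<le> \<xi> / real N * I" using xiN I by (rule mult_right_mono)
      have "(Lv + real N * LK) * t \<le> \<xi> * t" using xi t by (intro mult_right_mono) auto
      then show "exp ((Lv + real N * LK) * t) \<le> exp (\<xi> * t)" by simp
      show "0 \<le> \<xi> / real N * I" using I xiN assms(5) by (intro mult_nonneg_nonneg) auto
    qed simp
    also have "\<dots> = \<xi> * exp (\<xi> * t) / real N * I" by (simp add: field_simps)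
    finally show "norm (\<eta> t x - \<gamma> t x) \<le> \<xi> * exp (\<xi> * t) / real N * integral {0..t} (\<lambda>s. enn2real (W1 (\<mu> s) (\<nu> s)))"
      unfolding I_def .
  qed
qed



end
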